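(* Let $D$ be an $n\times n$ positive definite density matrix and let $A$ be an $n\times n$ self-adjoint matrix. Assume that $f,g$ are standard functions such that $$g(x)\ge c\,\frac{(x-1)^2}{f(x)}\qquad\text{for all }x>0$$ for some constant $c>0$. Then $$\mathrm{qCov}^g_D(A,A)\ \ge\ c\,\gamma^f_D\big([D,A],[D,A]\big).$$
   Context: A function $f:(0,\infty)\to(0,\infty)$ is called standard if it is operator monotone, $f(1)=1$ and $f(t)=tf(t^{-1})$ for all $t>0$. For a standard $f$ define the mean $M_f(a,b):=bf(a/b)$ for $a,b>0$. For a positive definite density matrix $D$ (i.e. $D>0$, $\mathrm{Tr}\,D=1$), let $\mathbf L_D(X)=DX$, $\mathbf R_D(X)=XD$ on $n\times n$ complex matrices and $\mathbb J^f_D:=f(\mathbf L_D\mathbf R_D^{-1})\mathbf R_D$. The quantum Fisher information is $\gamma^f_D(A,B):=\mathrm{Tr}\,A^*(\mathbb J^f_D)^{-1}(B)$ and the quantum covariance is $\mathrm{qCov}^f_D(A,B):=\mathrm{Tr}\,A^*\mathbb J^f_D(B)-(\mathrm{Tr}\,DA^* )(\mathrm{Tr}\,DB)$. Equivalently, if $D=\mathrm{Diag}(\lambda_1,\dots,\lambda_n)$ with $\lambda_i>0$, then $\gamma^f_D(A,B)=\sum_{i,j}\frac{1}{M_f(\lambda_i,\lambda_j)}\overline{A_{ij}}B_{ij}$ and $\mathrm{qCov}^f_D(A,B)=\sum_{i,j}M_f(\lambda_i,\lambda_j)\overline{A_{ij}}B_{ij}-\big(\sum_i\lambda_i\overline{A_{ii}}\big)\big(\sum_i\lambda_iB_{ii}\big)$.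 $[D,A]=DA-AD$. *)

theory Defs
  imports "Jordan_Normal_Form.Matrix" "HOL-Library.Complex_Order"
begin

definition adj :: "complex mat \<Rightarrow> complex mat" where
  "adj M = mat (dim_col M) (dim_row M) (\<lambda>(i,j). cnj (M $$ (j,i)))"

definition self_adjoint :: "complex mat \<Rightarrow> bool" where
  "self_adjoint M \<longleftrightarrow> dim_row M = dim_col M \<and> adj M = M"

definition unitary :: "nat \<Rightarrow> complex mat \<Rightarrow> bool" where
  "unitary n U \<longleftrightarrow> U \<in> carrier_mat n n \<and> adj U * U = 1\<^sub>m n"

definition qform :: "complex mat \<Rightarrow> (nat \<Rightarrow> complex) \<Rightarrow> complex" where
  "qform M v = (\<Sum>i<dim_row M. \<Sum>j<dim_row M. cnj (v i) * M $$ (i,j) * v j)"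

definition pos_semidef :: "complex mat \<Rightarrow> bool" where
  "pos_semidef M \<longleftrightarrow> self_adjoint M \<and> (\<forall>v. 0 \<le> Re (qform M v))"

definition pos_def :: "complex mat \<Rightarrow> bool" where
  "pos_def M \<longleftrightarrow> self_adjoint M \<and>
     (\<forall>v. (\<exists>i<dim_row M. v i \<noteq> 0) \<longrightarrow> 0 < Re (qform M v))"

definition diag_c :: "nat \<Rightarrow> (nat \<Rightarrow> real) \<Rightarrow> complex mat" where
  "diag_c n l = mat n n (\<lambda>(i,j). if i = j then complex_of_real (l i) else 0)"

definition spec_decomp :: "complex mat \<Rightarrow> complex mat \<times> (nat \<Rightarrow> real)" where
  "spec_decomp M = (SOME (U, l). unitary (dim_row M) U \<and> M = U * diag_c (dim_row M) l * adj U)"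

definition mat_fun :: "(real \<Rightarrow> real) \<Rightarrow> complex mat \<Rightarrow> complex mat" where
  "mat_fun f M = (case spec_decomp M of (U, l) \<Rightarrow> U * diag_c (dim_row M) (\<lambda>i. f (l i)) * adj U)"

definition operator_monotone :: "(real \<Rightarrow> real) \<Rightarrow> bool" where
  "operator_monotone f \<longleftrightarrow>
    (\<forall>n A B. A \<in> carrier_mat n n \<longrightarrow> B \<in> carrier_mat n n \<longrightarrow> pos_def A \<longrightarrow> pos_def B \<longrightarrow>
       pos_semidef (B - A) \<longrightarrow> pos_semidef (mat_fun f B - mat_fun f A))"

definition standard :: "(real \<Rightarrow> real) \<Rightarrow> bool" where
  "standard f \<longleftrightarrow> (\<forall>t>0. f t > 0) \<and> operator_monotone f \<and> f 1 = 1 \<and>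
     (\<forall>t>0. f t = t * f (1 / t))"

definition mean :: "(real \<Rightarrow> real) \<Rightarrow> real \<Rightarrow> real \<Rightarrow> real" where
  "mean f a b = b * f (a / b)"

definition density :: "complex mat \<Rightarrow> bool" where
  "density D \<longleftrightarrow> pos_def D \<and> (\<Sum>i<dim_row D. D $$ (i,i)) = 1"

definition qFisher :: "(real \<Rightarrow> real) \<Rightarrow> complex mat \<Rightarrow> complex mat \<Rightarrow> complex mat \<Rightarrow> complex" where
  "qFisher f D A B = (case spec_decomp D of (U, l) \<Rightarrow>
     let A' = adj U * A * U; B' = adj U * B * U in
     (\<Sum>i<dim_row D. \<Sum>j<dim_row D.
        complex_of_real (1 / mean f (l i) (l j)) * cnj (A' $$ (i,j)) * B' $$ (i,j)))"

definition qCov :: "(real \<Rightarrow> real) \<Rightarrow> complex mat \<Rightarrow> complex mat \<Rightarrow> complex mat \<Rightarrow> complex" where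
  "qCov f D A B = (case spec_decomp D of (U, l) \<Rightarrow>
     let A' = adj U * A * U; B' = adj U * B * U in
     (\<Sum>i<dim_row D. \<Sum>j<dim_row D.
        complex_of_real (mean f (l i) (l j)) * cnj (A' $$ (i,j)) * B' $$ (i,j))
     - (\<Sum>i<dim_row D. complex_of_real (l i) * cnj (A' $$ (i,i)))
       * (\<Sum>i<dim_row D. complex_of_real (l i) * B' $$ (i,i)))"

definition commutator :: "complex mat \<Rightarrow> complex mat \<Rightarrow> complex mat" where
  "commutator D A = D * A - A * D"

end

theory Submission imports Defs "Jordan_Normal_Form.Schur_Decomposition" "Jordan_Normal_Form.VS_Connect"
begin

lemma adj_carrier[simp]: "M \<in> carrier_mat n m \<Longrightarrow> adj M \<in> carrier_mat m n"
  by (auto simp: adj_def)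
lemma adj_dims[simp]: "dim_row (adj M) = dim_col M" "dim_col (adj M) = dim_row M"
  by (auto simp: adj_def)
lemma adj_index[simp]: "i < dim_col M \<Longrightarrow> j < dim_row M \<Longrightarrow> adj M $$ (i,j) = cnj (M $$ (j,i))"
  by (auto simp: adj_def)
lemma adj_adj[simp]: "adj (adj M) = M"
  by (rule eq_matI, auto)
lemma adj_mult: "A \<in> carrier_mat n m \<Longrightarrow> B \<in> carrier_mat m k \<Longrightarrow> adj (A * B) = adj B * adj A"
  by (rule eq_matI, auto simp: scalar_prod_def row_def col_def mult.commute)
lemma adj_one[simp]: "adj (1\<^sub>m n) = 1\<^sub>m n"
  by (rule eq_matI, auto)

lemma unitary_right: assumes "unitary n U" shows "U * adj U = 1\<^sub>m n"
proof -
  have U: "U \<in> carrier_mat n n" and e: "adj U * U = 1\<^sub>m n" using assms by (auto simp: unitary_def)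
  have "adj U \<in> carrier_mat n n" using U by auto
  from mat_mult_left_right_inverse[OF this U e] show ?thesis .
qed


lemma gs_sub2_len: "length (gram_schmidt_sub2 n vs ws) = length ws"
  by (induct ws arbitrary: vs, auto simp: Let_def)

lemma gs_sub2_nth: "j < length ws \<Longrightarrow> gram_schmidt_sub2 n vs ws ! j
   = adjuster n (ws!j) (rev (take j (gram_schmidt_sub2 n vs ws)) @ vs) + ws!j"
proof (induct ws arbitrary: vs j)
  case Nil then show ?case by simp
next
  case (Cons w ws)
  show ?case
  proof (cases j)
    case 0 then show ?thesis by (simp add: Let_def)
  next
    case (Suc j')
    then show ?thesis using Cons by (simp add: Let_def)
  qed
qed

lemma adjuster_carrier': "set us \<subseteq> carrier_vec n \<Longrightarrow> adjuster n w us \<in> carrier_vec n"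
  by (induct us, auto)

lemma adjuster_orth:
  fixes x w :: "complex vec"
  assumes "set us \<subseteq> carrier_vec n" "x \<in> carrier_vec n" "\<forall>u\<in>set us. u \<bullet>c x = 0"
  shows "adjuster n w us \<bullet>c x = 0"
  using assms
proof (induct us)
  case Nil then show ?case by simp
next
  case (Cons u us)
  have u: "u \<in> carrier_vec n" and us: "set us \<subseteq> carrier_vec n" using Cons by auto
  have cx: "conjugate x \<in> carrier_vec n" using Cons by auto
  have a: "adjuster n w us \<in> carrier_vec n" by (rule adjuster_carrier'[OF us])
  have "adjuster n w (u#us) \<bullet>c x = (-(w \<bullet>c u)/(u \<bullet>c u) \<cdot>\<^sub>v u) \<bullet>c x + adjuster n w us \<bullet>c x"
    by (simp, rule add_scalar_prod_distrib[OF _ a cx], insert u, auto)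
  also have "\<dots> = 0" using Cons u cx a by simp
  finally show ?case .
qed


lemma qr_step:
  fixes P :: "complex mat"
  assumes P: "P \<in> carrier_mat n n" and dP: "det P \<noteq> 0"
  defines "ws \<equiv> cols P"
  defines "us \<equiv> gram_schmidt n ws"
  shows "length us = n" "set us \<subseteq> carrier_vec n" "corthogonal us"
    "\<And>i j. i < n \<Longrightarrow> j \<le> i \<Longrightarrow> col P j \<bullet>c us!i = (if i = j then us!i \<bullet>c us!i else 0)"
proof -
  have ws: "set ws \<subseteq> carrier_vec n" "length ws = n" using P unfolding ws_def
    by (auto simp: cols_def)
  have dist: "distinct ws"
  proof (rule ccontr)
    assume "\<not> distinct ws"
    then obtain i j where ij: "i < n" "j < n" "i \<noteq> j" "ws!i = ws!j"
      using ws(2) by (metis distinct_conv_nth)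
    then have "col P i = col P j" using P unfolding ws_def by auto
    from det_identical_columns[OF P ij(3) ij(1,2) this] dP show False by simp
  qed
  interpret idom_vec n "TYPE(complex)" .
  have li: "\<not> lin_dep (set ws)" using lin_dep_cols_imp_det_0[OF P] dP unfolding ws_def by auto
  interpret cof_vec_space n "TYPE(complex)" .
  note gs = gram_schmidt_result[OF ws(1) dist li us_def[THEN meta_eq_to_obj_eq]]
  have gsl: "length us = n" using gs(4) ws(2) by simp
  show "length us = n" "set us \<subseteq> carrier_vec n" "corthogonal us" using gsl gs(2,3) by simp_all
  fix i j assume i: "i < n" and j: "j \<le> i"
  have jn: "j < n" using i j by auto
  have eq: "us!j = adjuster n (ws!j) (rev (take j us)) + ws!j"
  proof -
    have "gram_schmidt_sub2 n [] ws ! j = adjuster n (ws!j) (rev (take j (gram_schmidt_sub2 n [] ws)) @ []) + ws!j"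
      by (rule gs_sub2_nth) (simp add: ws(2) jn)
    then show ?thesis unfolding us_def gram_schmidt_code by simp
  qed
  have usj: "us!j \<in> carrier_vec n" "us!i \<in> carrier_vec n" using gs(3) gsl i jn by auto
  have wsj: "ws!j \<in> carrier_vec n" using ws jn by auto
  have tk: "set (rev (take j us)) \<subseteq> carrier_vec n" using gs(3)
    using set_take_subset[of j us] by (simp only: set_rev)
  define aa where "aa = adjuster n (ws!j) (rev (take j us))"
  have a: "aa \<in> carrier_vec n" unfolding aa_def by (rule adjuster_carrier'[OF tk])
  have wsj2: "ws!j = us!j - aa"
    using eq a wsj unfolding aa_def[symmetric] by auto
  have orth: "aa \<bullet>c us!i = 0" unfolding aa_def
  proof (rule adjuster_orth[OF tk usj(2)], rule ballI)
    fix u assume "u \<in> set (rev (take j us))"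
    then have "u \<in> set (take j us)" by simp
    then obtain k where k: "k < length (take j us)" "u = take j us ! k"
      by (metis in_set_conv_nth)
    then have k: "k < j" "u = us!k" by auto
    show "u \<bullet>c us!i = 0" using corthogonalD[OF gs(2), of k i] k i j gsl by auto
  qed
  have cu: "conjugate (us!i) \<in> carrier_vec n" using usj by auto
  have "col P j \<bullet>c us!i = ws!j \<bullet>c us!i" unfolding ws_def using jn P by auto
  also have "\<dots> = us!j \<bullet>c us!i - aa \<bullet>c us!i"
    unfolding wsj2 by (rule minus_scalar_prod_distrib[OF usj(1) a cu])
  also have "\<dots> = (if i = j then us!i \<bullet>c us!i else 0)"
    using orth corthogonalD[OF gs(2), of j i] i jn gsl by auto
  finally show "col P j \<bullet>c us!i = (if i = j then us!i \<bullet>c us!i else 0)" .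
qed


lemma cprod_sum: "v \<in> carrier_vec n \<Longrightarrow> w \<in> carrier_vec n \<Longrightarrow>
   v \<bullet>c w = (\<Sum>m<n. v$m * cnj (w$m))"
  unfolding scalar_prod_def by (auto intro!: sum.cong simp: lessThan_atLeast0)

lemma cprod_self_pos: fixes v :: "complex vec"
  assumes "v \<in> carrier_vec n" "v \<bullet>c v \<noteq> 0"
  shows "v \<bullet>c v = complex_of_real (Re (v \<bullet>c v))" "Re (v \<bullet>c v) > 0"
proof -
  have "v \<bullet>c v \<ge> 0" by (rule conjugate_square_ge_0_vec)
  then have "v \<bullet>c v > 0" using assms(2) by (simp add: order_le_less)
  then show "v \<bullet>c v = complex_of_real (Re (v \<bullet>c v))" "Re (v \<bullet>c v) > 0"
    by (auto simp: less_complex_def complex_eq_iff)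
qed

lemma unitary_of_orth:
  fixes us :: "complex vec list"
  assumes len: "length us = n" and car: "set us \<subseteq> carrier_vec n" and orth: "corthogonal us"
  defines "s \<equiv> \<lambda>i. sqrt (Re (us!i \<bullet>c us!i))"
  defines "U \<equiv> mat n n (\<lambda>(k,i). us!i $ k / complex_of_real (s i))"
  shows "unitary n U"
    "\<And>(P::complex mat) i j. P \<in> carrier_mat n n \<Longrightarrow> i < n \<Longrightarrow> j < n \<Longrightarrow>
        (adj U * P) $$ (i,j) = (col P j \<bullet>c us!i) / complex_of_real (s i)"
proof -
  have usc: "\<And>i. i < n \<Longrightarrow> us!i \<in> carrier_vec n" using car len by auto
  have nz: "\<And>i. i < n \<Longrightarrow> us!i \<bullet>c us!i \<noteq> 0" using corthogonalD[OF orth] len by auto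
  have sp: "\<And>i. i < n \<Longrightarrow> s i > 0" unfolding s_def using cprod_self_pos(2)[OF usc nz] by auto
  have ss: "\<And>i. i < n \<Longrightarrow> complex_of_real (s i) * complex_of_real (s i) = us!i \<bullet>c us!i"
  proof -
    fix i assume i: "i < n"
    have r: "Re (us!i \<bullet>c us!i) > 0" by (rule cprod_self_pos(2)[OF usc[OF i] nz[OF i]])
    have "s i * s i = Re (us!i \<bullet>c us!i)" unfolding s_def using r by simp
    then have "complex_of_real (s i) * complex_of_real (s i) = complex_of_real (Re (us!i \<bullet>c us!i))"
      by (simp only: of_real_mult[symmetric])
    also have "\<dots> = us!i \<bullet>c us!i" by (rule cprod_self_pos(1)[OF usc[OF i] nz[OF i], symmetric])
    finally show "?thesis i" .
  qed
  have U: "U \<in> carrier_mat n n" unfolding U_def by auto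
  have e: "adj U * U = 1\<^sub>m n"
  proof (rule eq_matI)
    fix i k assume i: "i < dim_row (1\<^sub>m n)" and k: "k < dim_col (1\<^sub>m n)"
    then have i: "i < n" and k: "k < n" by auto
    have "(adj U * U) $$ (i,k) = (\<Sum>m<n. cnj (U $$ (m,i)) * U $$ (m,k))"
      using U i k by (auto simp: scalar_prod_def lessThan_atLeast0 intro!: sum.cong)
    also have "\<dots> = (\<Sum>m<n. us!k $ m * cnj (us!i $ m)) / (complex_of_real (s i) * complex_of_real (s k))"
      unfolding sum_divide_distrib U_def using i k by (auto intro!: sum.cong)
    also have "\<dots> = (us!k \<bullet>c us!i) / (complex_of_real (s i) * complex_of_real (s k))"
      using cprod_sum[OF usc[OF k] usc[OF i]] by simp
    also have "\<dots> = 1\<^sub>m n $$ (i,k)"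
    proof (cases "i = k")
      case True
      then show ?thesis using ss[OF i] nz[OF i] i by simp
    next
      case False
      then show ?thesis using corthogonalD[OF orth, of k i] len i k by simp
    qed
    finally show "(adj U * U) $$ (i,k) = 1\<^sub>m n $$ (i,k)" .
  qed (use U in auto)
  show "unitary n U" unfolding unitary_def using U e by auto
  fix P :: "complex mat" and i j assume P: "P \<in> carrier_mat n n" and i: "i < n" and j: "j < n"
  have "(adj U * P) $$ (i,j) = (\<Sum>m<n. cnj (U $$ (m,i)) * P $$ (m,j))"
    using U P i j by (auto simp: scalar_prod_def lessThan_atLeast0 intro!: sum.cong)
  also have "\<dots> = (\<Sum>m<n. col P j $ m * cnj (us!i $ m)) / complex_of_real (s i)"
    unfolding sum_divide_distrib U_def using i j P by (auto intro!: sum.cong)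
  also have "\<dots> = (col P j \<bullet>c us!i) / complex_of_real (s i)"
    using cprod_sum[OF _ usc[OF i], of "col P j"] P by (simp add: carrier_vecI)
  finally show "(adj U * P) $$ (i,j) = (col P j \<bullet>c us!i) / complex_of_real (s i)" .
qed


lemma ut_lemma:
  fixes H T B :: "complex mat"
  assumes H: "H \<in> carrier_mat n n" and T: "T \<in> carrier_mat n n" and B: "B \<in> carrier_mat n n"
    and uT: "upper_triangular T" and dT: "\<And>j. j < n \<Longrightarrow> T $$ (j,j) \<noteq> 0"
    and uB: "upper_triangular B" and eq: "H * T = T * B"
  shows "upper_triangular H"
proof -
  have T0: "\<And>i j. i < n \<Longrightarrow> j < i \<Longrightarrow> T $$ (i,j) = 0" using uT T unfolding upper_triangular_def by auto
  have B0: "\<And>i j. i < n \<Longrightarrow> j < i \<Longrightarrow> B $$ (i,j) = 0" using uB B unfolding upper_triangular_def by auto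
  have main: "\<forall>i. i < n \<longrightarrow> j < i \<longrightarrow> H $$ (i,j) = 0" for j
  proof (induct j rule: less_induct)
    case (less j)
    show ?case
    proof (intro allI impI)
      fix i assume i: "i < n" and ji: "j < i"
      have jn: "j < n" using i ji by auto
      have "(T * B) $$ (i,j) = (\<Sum>k<n. T $$ (i,k) * B $$ (k,j))"
        using T B i jn by (auto simp: scalar_prod_def lessThan_atLeast0 intro!: sum.cong)
      also have "\<dots> = (\<Sum>k<n. 0)"
      proof (rule sum.cong)
        fix k assume k: "k \<in> {..<n}"
        show "T $$ (i,k) * B $$ (k,j) = 0"
        proof (cases "k < i")
          case True then show ?thesis using T0[OF i] by simp
        next
          case False then have "j < k" using ji by auto
          then show ?thesis using B0 k by simp
        qed
      qed simp
      finally have z: "(T * B) $$ (i,j) = 0" by simp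
      have "(H * T) $$ (i,j) = (\<Sum>k<n. H $$ (i,k) * T $$ (k,j))"
        using H T i jn by (auto simp: scalar_prod_def lessThan_atLeast0 intro!: sum.cong)
      also have "\<dots> = (\<Sum>k<n. if k = j then H $$ (i,j) * T $$ (j,j) else 0)"
      proof (rule sum.cong)
        fix k assume k: "k \<in> {..<n}"
        show "H $$ (i,k) * T $$ (k,j) = (if k = j then H $$ (i,j) * T $$ (j,j) else 0)"
        proof (cases "k < j")
          case True then show ?thesis using less[OF True] i ji by auto
        next
          case False then show ?thesis using T0 k by auto
        qed
      qed simp
      also have "\<dots> = H $$ (i,j) * T $$ (j,j)" using jn by simp
      finally have "H $$ (i,j) * T $$ (j,j) = 0" using z eq by simp
      then show "H $$ (i,j) = 0" using dT[OF jn] by simp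
    qed
  qed
  show ?thesis unfolding upper_triangular_def using main H by auto
qed

lemma assoc': "dim_col (A::'a::semiring_0 mat) = dim_row B \<Longrightarrow> dim_col B = dim_row C \<Longrightarrow> A * B * C = A * (B * C)"
  by (rule assoc_mult_mat[of A "dim_row A" "dim_col A" B "dim_col B" C "dim_col C"]) auto
lemma mc: "A \<in> carrier_mat n m \<Longrightarrow> dim_row A = n \<and> dim_col A = m" by auto

lemma diag_c_carrier[simp]: "diag_c n l \<in> carrier_mat n n" by (simp add: diag_c_def)

lemma spectral:
  fixes A :: "complex mat"
  assumes A: "A \<in> carrier_mat n n" and sa: "adj A = A"
  shows "\<exists>U l. unitary n U \<and> A = U * diag_c n l * adj U"
proof -
  obtain es where es: "char_poly A = (\<Prod>a\<leftarrow>es. [:- a, 1:])" using char_poly_factorized[OF A] by blast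
  obtain B P Q where sd: "schur_decomposition A es = (B,P,Q)" by (cases "schur_decomposition A es", auto)
  from schur_decomposition[OF A es sd] have sw: "similar_mat_wit A B P Q" and uB: "upper_triangular B" by auto
  from similar_mat_witD2[OF A sw] have B: "B \<in> carrier_mat n n" and P: "P \<in> carrier_mat n n"
    and Q: "Q \<in> carrier_mat n n" and PQ: "P * Q = 1\<^sub>m n" and QP: "Q * P = 1\<^sub>m n" and AE: "A = P * B * Q"
    by auto
  have "det P * det Q = 1" using det_mult[OF P Q] PQ by simp
  then have dP: "det P \<noteq> 0" by auto
  define us where "us = gram_schmidt n (cols P)"
  note qr = qr_step[OF P dP, folded us_def]
  define s where "s = (\<lambda>i. sqrt (Re (us!i \<bullet>c us!i)))"
  define U where "U = mat n n (\<lambda>(k,i). us!i $ k / complex_of_real (s i))"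
  note uo = unitary_of_orth[OF qr(1-3)]
  have uU: "unitary n U" unfolding U_def s_def by (rule uo(1))
  have U: "U \<in> carrier_mat n n" and UU: "adj U * U = 1\<^sub>m n" using uU unfolding unitary_def by auto
  have UU': "U * adj U = 1\<^sub>m n" by (rule unitary_right[OF uU])
  have aU: "adj U \<in> carrier_mat n n" using U by simp
  note dims = mc[OF U] mc[OF aU] mc[OF A] mc[OF P] mc[OF Q] mc[OF B]
  define T where "T = adj U * P"
  have T: "T \<in> carrier_mat n n" unfolding T_def by (rule mult_carrier_mat[OF aU P])
  have Tij: "\<And>i j. i < n \<Longrightarrow> j \<le> i \<Longrightarrow> T $$ (i,j) = (if i = j then us!i \<bullet>c us!i else 0) / complex_of_real (s i)"
    unfolding T_def U_def s_def using uo(2)[OF P] qr(4) by auto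
  have nz: "\<And>i. i < n \<Longrightarrow> us!i \<bullet>c us!i \<noteq> 0" using corthogonalD[OF qr(3)] qr(1) by auto
  have uspos: "\<And>i. i < n \<Longrightarrow> s i > 0" unfolding s_def
    using cprod_self_pos(2)[OF _ nz] qr(1,2) by (metis nth_mem real_sqrt_gt_zero subset_iff)
  have uT: "upper_triangular T" unfolding upper_triangular_def using Tij T by auto
  have dT: "\<And>j. j < n \<Longrightarrow> T $$ (j,j) \<noteq> 0"
  proof -
    fix j assume j: "j < n"
    show "T $$ (j,j) \<noteq> 0" using Tij[OF j order_refl] nz[OF j] uspos[OF j] by simp
  qed
  define H where "H = adj U * A * U"
  have H: "H \<in> carrier_mat n n" unfolding H_def by (rule mult_carrier_mat[OF mult_carrier_mat[OF aU A] U])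
  have AP: "A * P = P * B"
  proof -
    have "A * P = P * B * (Q * P)" using AE P B Q by (simp add: assoc' dims)
    then show ?thesis using QP P B by (simp add: assoc' dims)
  qed
  have HT: "H * T = T * B"
  proof -
    have "H * T = adj U * A * (U * adj U) * P" unfolding H_def T_def using U A P aU by (simp add: assoc' dims)
    also have "\<dots> = adj U * (A * P)" using UU' A aU P by (simp add: assoc' dims)
    also have "\<dots> = adj U * (P * B)" using AP by simp
    also have "\<dots> = T * B" unfolding T_def using aU P B by (simp add: assoc' dims)
    finally show ?thesis .
  qed
  have uH: "upper_triangular H" by (rule ut_lemma[OF H T B uT dT uB HT])
  have aH: "adj H = H"
  proof -
    have "adj H = adj U * adj (adj U * A)" unfolding H_def by (rule adj_mult[OF mult_carrier_mat[OF aU A] U])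
    also have "\<dots> = adj U * (A * U)" using adj_mult[OF aU A] sa by simp
    also have "\<dots> = H" unfolding H_def by (simp add: assoc' dims)
    finally show ?thesis .
  qed
  define l where "l = (\<lambda>i. Re (H $$ (i,i)))"
  have Hd: "H = diag_c n l"
  proof (rule eq_matI)
    fix i j assume "i < dim_row (diag_c n l)" "j < dim_col (diag_c n l)"
    then have i: "i < n" and j: "j < n" by (auto simp: diag_c_def)
    have hc: "H $$ (i,j) = cnj (H $$ (j,i))" using arg_cong[OF aH, of "\<lambda>M. M $$ (i,j)"] H i j by simp
    show "H $$ (i,j) = diag_c n l $$ (i,j)"
    proof (cases "i = j")
      case True
      then have "H $$ (i,i) = cnj (H $$ (i,i))" using hc by simp
      then have "Im (H $$ (i,i)) = 0" by (metis cnj.sel(2) complex.expand neg_equal_zero cnj.sel(1))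
      then show ?thesis using True i unfolding diag_c_def l_def by (simp add: complex_eq_iff)
    next
      case False
      then have "i < j \<or> j < i" by auto
      then have "H $$ (i,j) = 0"
      proof
        assume "j < i" then show ?thesis using uH H i unfolding upper_triangular_def by auto
      next
        assume "i < j" then have "H $$ (j,i) = 0" using uH H j unfolding upper_triangular_def by auto
        then show ?thesis using hc by simp
      qed
      then show ?thesis using False i j unfolding diag_c_def by simp
    qed
  qed (use H in \<open>auto simp: diag_c_def\<close>)
  have "U * H * adj U = (U * adj U) * A * (U * adj U)" unfolding H_def using U aU A by (simp add: assoc' dims)
  also have "\<dots> = A" using UU' A by (simp add: assoc' dims)
  finally have "A = U * diag_c n l * adj U" using Hd by simp
  then show ?thesis using uU by blast
qed


lemma mult_ij: "X \<in> carrier_mat n m \<Longrightarrow> Y \<in> carrier_mat m p \<Longrightarrow> i < n \<Longrightarrow> j < p \<Longrightarrow>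
  (X * Y) $$ (i,j) = (\<Sum>k<m. X $$ (i,k) * Y $$ (k,j))"
  by (auto simp: scalar_prod_def lessThan_atLeast0 intro!: sum.cong)

lemma diag_mult_ij: "X \<in> carrier_mat n m \<Longrightarrow> i < n \<Longrightarrow> j < m \<Longrightarrow>
  (diag_c n l * X) $$ (i,j) = complex_of_real (l i) * X $$ (i,j)"
proof -
  assume X: "X \<in> carrier_mat n m" and i: "i < n" and j: "j < m"
  have "(diag_c n l * X) $$ (i,j) = (\<Sum>k<n. diag_c n l $$ (i,k) * X $$ (k,j))"
    by (rule mult_ij[OF diag_c_carrier X i j])
  also have "\<dots> = (\<Sum>k<n. if k = i then complex_of_real (l i) * X $$ (i,j) else 0)"
    by (rule sum.cong, auto simp: diag_c_def i)
  also have "\<dots> = complex_of_real (l i) * X $$ (i,j)" using i by simp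
  finally show ?thesis .
qed

lemma mult_diag_ij: "X \<in> carrier_mat m n \<Longrightarrow> i < m \<Longrightarrow> j < n \<Longrightarrow>
  (X * diag_c n l) $$ (i,j) = X $$ (i,j) * complex_of_real (l j)"
proof -
  assume X: "X \<in> carrier_mat m n" and i: "i < m" and j: "j < n"
  have "(X * diag_c n l) $$ (i,j) = (\<Sum>k<n. X $$ (i,k) * diag_c n l $$ (k,j))"
    by (rule mult_ij[OF X diag_c_carrier i j])
  also have "\<dots> = (\<Sum>k<n. if k = j then X $$ (i,j) * complex_of_real (l j) else 0)"
    by (rule sum.cong, auto simp: diag_c_def j)
  also have "\<dots> = X $$ (i,j) * complex_of_real (l j)" using j by simp
  finally show ?thesis .
qed

lemma pointwise:
  fixes a b c :: real and f g :: "real \<Rightarrow> real"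
  assumes a: "a > 0" and b: "b > 0" and fp: "f (a/b) > 0"
    and h: "g (a/b) \<ge> c * (a/b - 1)^2 / f (a/b)"
  shows "mean g a b \<ge> c * (1 / mean f a b) * (a - b)^2"
proof -
  have "mean g a b \<ge> b * (c * (a/b - 1)^2 / f (a/b))" unfolding mean_def
    using mult_left_mono[OF h, of b] b by simp
  moreover have "b * (c * (a/b - 1)^2 / f (a/b)) = c * (1 / mean f a b) * (a - b)^2"
    unfolding mean_def using b fp by (simp add: field_simps power2_eq_square)
  ultimately show ?thesis by simp
qed

lemma var_ineq:
  fixes l r :: "nat \<Rightarrow> real"
  assumes "\<And>i. i < n \<Longrightarrow> l i \<ge> 0" and "(\<Sum>i<n. l i) = 1"
  shows "(\<Sum>i<n. l i * r i) ^ 2 \<le> (\<Sum>i<n. l i * (r i)^2)"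
proof -
  define m where "m = (\<Sum>i<n. l i * r i)"
  have "0 \<le> (\<Sum>i<n. l i * (r i - m)^2)" using assms(1) by (intro sum_nonneg) simp
  also have "\<dots> = (\<Sum>i<n. l i * (r i)^2) - 2 * m * (\<Sum>i<n. l i * r i) + m^2 * (\<Sum>i<n. l i)"
    by (simp add: power2_eq_square algebra_simps sum.distrib sum_subtractf sum_distrib_left)
  also have "\<dots> = (\<Sum>i<n. l i * (r i)^2) - m^2" using assms(2) unfolding m_def by (simp add: power2_eq_square)
  finally show ?thesis unfolding m_def by simp
qed


theorem theorem1:
  fixes n :: nat and D A :: "complex mat" and f g :: "real \<Rightarrow> real" and c :: real
  assumes "D \<in> carrier_mat n n" and "density D"
    and "A \<in> carrier_mat n n" and "self_adjoint A"
    and "standard f" and "standard g"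
    and "c > 0" and "\<forall>x>0. g x \<ge> c * (x - 1)^2 / f x"
  shows "qCov g D A A \<ge> complex_of_real c * qFisher f D (commutator D A) (commutator D A)"
proof -
  note Dc = assms(1) and Ac = assms(3)
  have pdD: "pos_def D" using assms(2) unfolding density_def by auto
  have sD: "adj D = D" using pdD unfolding pos_def_def self_adjoint_def by auto
  have sA: "adj A = A" using assms(4) unfolding self_adjoint_def by auto
  have dr: "dim_row D = n" using Dc by simp
  have ex: "\<exists>p. case p of (U,l) \<Rightarrow> unitary n U \<and> D = U * diag_c n l * adj U"
    using spectral[OF Dc sD] by auto
  obtain U l where sp: "spec_decomp D = (U,l)" by (cases "spec_decomp D") auto
  have "case spec_decomp D of (U,l) \<Rightarrow> unitary n U \<and> D = U * diag_c n l * adj U"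
    unfolding spec_decomp_def dr by (rule someI_ex[OF ex])
  then have uU: "unitary n U" and DE: "D = U * diag_c n l * adj U" using sp by auto
  have U: "U \<in> carrier_mat n n" and UU: "adj U * U = 1\<^sub>m n" using uU unfolding unitary_def by auto
  have UU': "U * adj U = 1\<^sub>m n" by (rule unitary_right[OF uU])
  have aU: "adj U \<in> carrier_mat n n" using U by simp
  define L where "L = diag_c n l"
  have L: "L \<in> carrier_mat n n" unfolding L_def by simp
  note dims = mc[OF U] mc[OF aU] mc[OF Ac] mc[OF Dc] mc[OF L]
  have DE': "D = U * L * adj U" using DE unfolding L_def .
  have DU: "D * U = U * L"
  proof -
    have "D * U = U * L * (adj U * U)" unfolding DE' by (simp add: assoc' dims)
    then show ?thesis using UU by (simp add: dims)
  qed
  have UD: "adj U * D = L * adj U"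
  proof -
    have "adj U * D = (adj U * U) * L * adj U" unfolding DE' by (simp add: assoc' dims)
    then show ?thesis using UU by (simp add: dims)
  qed
  have LE: "adj U * D * U = L"
  proof -
    have "adj U * D * U = L * (adj U * U)" unfolding UD by (simp add: assoc' dims)
    then show ?thesis using UU by (simp add: dims)
  qed
  define A' where "A' = adj U * A * U"
  have A': "A' \<in> carrier_mat n n" unfolding A'_def by (rule mult_carrier_mat[OF mult_carrier_mat[OF aU Ac] U])
  have aA': "adj A' = A'"
  proof -
    have "adj A' = adj U * adj (adj U * A)" unfolding A'_def by (rule adj_mult[OF mult_carrier_mat[OF aU Ac] U])
    also have "\<dots> = adj U * (A * U)" using adj_mult[OF aU Ac] sA by simp
    also have "\<dots> = A'" unfolding A'_def by (simp add: assoc' dims)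
    finally show ?thesis .
  qed
  have herm: "\<And>i j. i < n \<Longrightarrow> j < n \<Longrightarrow> A' $$ (j,i) = cnj (A' $$ (i,j))"
    using aA' A' by (metis adj_index carrier_matD(1) carrier_matD(2))
  define C' where "C' = adj U * commutator D A * U"
  have CE: "C' = L * A' - A' * L"
  proof -
    have DA: "D * A \<in> carrier_mat n n" "A * D \<in> carrier_mat n n" using Dc Ac by auto
    have "C' = (adj U * (D * A) - adj U * (A * D)) * U" unfolding C'_def commutator_def
      by (subst mult_minus_distrib_mat[OF aU DA]) simp
    also have "\<dots> = adj U * (D * A) * U - adj U * (A * D) * U"
      by (rule minus_mult_distrib_mat[OF mult_carrier_mat[OF aU DA(1)] mult_carrier_mat[OF aU DA(2)] U])
    also have "adj U * (D * A) * U = (adj U * D) * (A * U)" by (simp add: assoc' dims)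
    also have "\<dots> = L * A'" unfolding UD A'_def by (simp add: assoc' dims)
    also have "adj U * (A * D) * U = (adj U * A) * (D * U)" by (simp add: assoc' dims)
    also have "\<dots> = A' * L" unfolding DU A'_def by (simp add: assoc' dims)
    finally show ?thesis .
  qed
  have Cij: "\<And>i j. i < n \<Longrightarrow> j < n \<Longrightarrow> C' $$ (i,j) = complex_of_real (l i - l j) * A' $$ (i,j)"
  proof -
    fix i j assume i: "i < n" and j: "j < n"
    have "C' $$ (i,j) = (L * A') $$ (i,j) - (A' * L) $$ (i,j)" unfolding CE using i j L A' by simp
    also have "\<dots> = complex_of_real (l i) * A' $$ (i,j) - A' $$ (i,j) * complex_of_real (l j)"
      unfolding L_def using diag_mult_ij[OF A' i j] mult_diag_ij[OF A' i j] by simp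
    also have "\<dots> = complex_of_real (l i - l j) * A' $$ (i,j)" by (simp add: algebra_simps)
    finally show "C' $$ (i,j) = complex_of_real (l i - l j) * A' $$ (i,j)" .
  qed
  have lpos: "\<And>i. i < n \<Longrightarrow> l i > 0"
  proof -
    fix i assume i: "i < n"
    define v where "v = (\<lambda>k. U $$ (k,i))"
    have "complex_of_real (l i) = L $$ (i,i)" unfolding L_def diag_c_def using i by simp
    also have "\<dots> = (adj U * D * U) $$ (i,i)" unfolding LE ..
    also have "\<dots> = (\<Sum>b<n. (adj U * D) $$ (i,b) * U $$ (b,i))"
      by (rule mult_ij[OF mult_carrier_mat[OF aU Dc] U i i])
    also have "\<dots> = (\<Sum>b<n. (\<Sum>a<n. cnj (U $$ (a,i)) * D $$ (a,b)) * U $$ (b,i))"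
      by (rule sum.cong[OF refl], subst mult_ij[OF aU Dc i], simp, rule arg_cong[where f="\<lambda>x. x * _"],
          rule sum.cong, insert U i, auto)
    also have "\<dots> = (\<Sum>b<n. \<Sum>a<n. cnj (v a) * D $$ (a,b) * v b)"
      unfolding v_def by (simp add: sum_distrib_right)
    also have "\<dots> = qform D v" unfolding qform_def dr by (rule sum.swap)
    finally have lq: "complex_of_real (l i) = qform D v" .
    have "(\<Sum>k<n. cnj (U $$ (k,i)) * U $$ (k,i)) = (adj U * U) $$ (i,i)"
      by (subst mult_ij[OF aU U i i], rule sum.cong, insert U i, auto)
    also have "\<dots> = 1" using UU i by simp
    finally have "(\<Sum>k<n. cnj (U $$ (k,i)) * U $$ (k,i)) \<noteq> 0" by simp
    then obtain k where k: "k < n" "v k \<noteq> 0" unfolding v_def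
      by (metis (no_types, lifting) lessThan_iff mult_zero_right sum.neutral)
    then have "0 < Re (qform D v)" using pdD dr unfolding pos_def_def by auto
    then show "l i > 0" using lq by (metis Re_complex_of_real)
  qed
  have cn: "\<And>b. b < n \<Longrightarrow> (\<Sum>k<n. cnj (U $$ (k,b)) * U $$ (k,b)) = 1"
  proof -
    fix b assume b: "b < n"
    have "(\<Sum>k<n. cnj (U $$ (k,b)) * U $$ (k,b)) = (adj U * U) $$ (b,b)"
      by (subst mult_ij[OF aU U b b], rule sum.cong, insert U b, auto)
    also have "\<dots> = 1" using UU b by simp
    finally show "?thesis b" .
  qed
  have lsum: "(\<Sum>i<n. l i) = 1"
  proof -
    have Dii: "\<And>i. i < n \<Longrightarrow> D $$ (i,i) = (\<Sum>b<n. complex_of_real (l b) * (cnj (U $$ (i,b)) * U $$ (i,b)))"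
    proof -
      fix i assume i: "i < n"
      have "D $$ (i,i) = (\<Sum>b<n. (U * L) $$ (i,b) * adj U $$ (b,i))"
        unfolding DE' by (rule mult_ij[OF mult_carrier_mat[OF U L] aU i i])
      also have "\<dots> = (\<Sum>b<n. complex_of_real (l b) * (cnj (U $$ (i,b)) * U $$ (i,b)))"
        by (rule sum.cong[OF refl], insert U i, simp add: L_def mult_diag_ij[OF U])
      finally show "?thesis i" .
    qed
    have "1 = (\<Sum>i<n. D $$ (i,i))" using assms(2) dr unfolding density_def by simp
    also have "\<dots> = (\<Sum>i<n. \<Sum>b<n. complex_of_real (l b) * (cnj (U $$ (i,b)) * U $$ (i,b)))"
      using Dii by simp
    also have "\<dots> = (\<Sum>b<n. complex_of_real (l b) * (\<Sum>i<n. cnj (U $$ (i,b)) * U $$ (i,b)))"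
      by (subst sum.swap) (simp add: sum_distrib_left)
    also have "\<dots> = (\<Sum>b<n. complex_of_real (l b))" using cn by simp
    finally have "complex_of_real (\<Sum>b<n. l b) = 1" by simp
    then show ?thesis by (metis of_real_eq_1_iff)
  qed
  define a where "a = (\<lambda>i j. A' $$ (i,j))"
  define r where "r = (\<lambda>i. Re (a i i))"
  have aii: "\<And>i. i < n \<Longrightarrow> a i i = complex_of_real (r i)"
  proof -
    fix i assume i: "i < n"
    have "a i i = cnj (a i i)" unfolding a_def using herm[OF i i] .
    then have "Im (a i i) = 0" by (metis cnj.simps(2) complex.expand neg_equal_zero cnj.simps(1))
    then show "a i i = complex_of_real (r i)" unfolding r_def by (simp add: complex_eq_iff)
  qed
  have cz: "\<And>z::complex. cnj z * z = complex_of_real ((cmod z)^2)"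
    by (metis complex_norm_square mult.commute)
  define mg where "mg = (\<lambda>i j. mean g (l i) (l j))"
  define mf where "mf = (\<lambda>i j. mean f (l i) (l j))"
  define X where "X = (\<Sum>i<n. \<Sum>j<n. mg i j * (cmod (a i j))^2) - (\<Sum>i<n. l i * r i)^2"
  define Y where "Y = (\<Sum>i<n. \<Sum>j<n. (1 / mf i j) * (l i - l j)^2 * (cmod (a i j))^2)"
  have qCovE: "qCov g D A A = complex_of_real X"
  proof -
    have "qCov g D A A = (\<Sum>i<n. \<Sum>j<n. complex_of_real (mg i j) * cnj (a i j) * a i j)
       - (\<Sum>i<n. complex_of_real (l i) * cnj (a i i)) * (\<Sum>i<n. complex_of_real (l i) * a i i)"
      unfolding qCov_def sp dr Let_def a_def mg_def A'_def by simp
    also have "(\<Sum>i<n. \<Sum>j<n. complex_of_real (mg i j) * cnj (a i j) * a i j)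
       = complex_of_real (\<Sum>i<n. \<Sum>j<n. mg i j * (cmod (a i j))^2)"
      by (simp add: cz mult.assoc)
    also have "(\<Sum>i<n. complex_of_real (l i) * cnj (a i i)) = complex_of_real (\<Sum>i<n. l i * r i)"
      by (simp add: aii)
    also have "(\<Sum>i<n. complex_of_real (l i) * a i i) = complex_of_real (\<Sum>i<n. l i * r i)"
      by (simp add: aii)
    finally show ?thesis unfolding X_def by (simp add: power2_eq_square)
  qed
  have qFE: "qFisher f D (commutator D A) (commutator D A) = complex_of_real Y"
  proof -
    have "qFisher f D (commutator D A) (commutator D A)
       = (\<Sum>i<n. \<Sum>j<n. complex_of_real (1 / mf i j) * cnj (C' $$ (i,j)) * C' $$ (i,j))"
      unfolding qFisher_def sp dr Let_def C'_def mf_def by simp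
    also have "\<dots> = (\<Sum>i<n. \<Sum>j<n. complex_of_real ((1 / mf i j) * (l i - l j)^2 * (cmod (a i j))^2))"
    proof (rule sum.cong[OF refl], rule sum.cong[OF refl])
      fix i j assume "i \<in> {..<n}" "j \<in> {..<n}"
      then have i: "i < n" and j: "j < n" by auto
      have "cnj (C' $$ (i,j)) * C' $$ (i,j) = complex_of_real ((l i - l j)^2) * (cnj (a i j) * a i j)"
        unfolding Cij[OF i j] a_def by (simp add: power2_eq_square algebra_simps)
      then show "complex_of_real (1 / mf i j) * cnj (C' $$ (i,j)) * C' $$ (i,j)
         = complex_of_real ((1 / mf i j) * (l i - l j)^2 * (cmod (a i j))^2)"
        by (simp add: cz mult.assoc)
    qed
    also have "\<dots> = complex_of_real Y" unfolding Y_def by simp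
    finally show ?thesis .
  qed
  have fpos: "\<And>t. t > 0 \<Longrightarrow> f t > 0" using assms(5) unfolding standard_def by blast
  have g1: "g 1 = 1" using assms(6) unfolding standard_def by blast
  have pt: "\<And>i j. i < n \<Longrightarrow> j < n \<Longrightarrow>
     c * ((1 / mf i j) * (l i - l j)^2 * (cmod (a i j))^2) + (if i = j then l i * (r i)^2 else 0)
       \<le> mg i j * (cmod (a i j))^2"
  proof -
    fix i j assume i: "i < n" and j: "j < n"
    show "?thesis i j"
    proof (cases "i = j")
      case True
      have "mg i i = l i" unfolding mg_def mean_def using lpos[OF i] g1 by simp
      moreover have "(cmod (a i i))^2 = (r i)^2" using aii[OF i] by simp
      ultimately show ?thesis using True by simp
    next
      case False
      have q: "l i / l j > 0" using lpos[OF i] lpos[OF j] by simp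
      have "mg i j \<ge> c * (1 / mf i j) * (l i - l j)^2" unfolding mg_def mf_def
        by (rule pointwise[where f=f, OF lpos[OF i] lpos[OF j] fpos[OF q]], insert assms(8) q, auto)
      then have "c * (1 / mf i j) * (l i - l j)^2 * (cmod (a i j))^2 \<le> mg i j * (cmod (a i j))^2"
        by (rule mult_right_mono) simp
      then show ?thesis using False by (simp add: mult.assoc)
    qed
  qed
  have "c * Y + (\<Sum>i<n. l i * (r i)^2)
      = (\<Sum>i<n. \<Sum>j<n. c * ((1 / mf i j) * (l i - l j)^2 * (cmod (a i j))^2) + (if i = j then l i * (r i)^2 else 0))"
    unfolding Y_def by (simp add: sum.distrib sum_distrib_left)
  also have "\<dots> \<le> (\<Sum>i<n. \<Sum>j<n. mg i j * (cmod (a i j))^2)"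
    by (rule sum_mono, rule sum_mono, use pt in auto)
  finally have s1: "c * Y + (\<Sum>i<n. l i * (r i)^2) \<le> (\<Sum>i<n. \<Sum>j<n. mg i j * (cmod (a i j))^2)" .
  have s2: "(\<Sum>i<n. l i * r i)^2 \<le> (\<Sum>i<n. l i * (r i)^2)"
    by (rule var_ineq[OF _ lsum]) (use lpos in \<open>auto simp: less_imp_le\<close>)
  have ineq: "c * Y \<le> X" unfolding X_def using s1 s2 by linarith
  show ?thesis unfolding qCovE qFE using ineq by (simp add: less_eq_complex_def)
qed

end
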